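(* Let $G$ be a graph and $v$ a vertex of $G$ with degree $d_v$ in $G$. Let $G+c$ be the graph obtained by attaching to $G$ a new cycle $c$ of length $s_c\geq 3$ which shares only the vertex $v$ with $G$ (all its other vertices and edges are new). Then: (1) If $d_w\geq 2$ for every neighbor $w$ of $v$ in $G$, then \[R(G+c)-R(G)\geq \frac{\sqrt{d_v+2}-\sqrt{d_v}}{\sqrt 2}+\frac{s_c-2}{2},\] with equality if all these $d_w=2$. (2) If $d_v\geq 2$ and $d_w\leq d_v+2$ for every neighbor $w$ of $v$ in $G$, then \[R(G+c)-R(G)\leq \frac{s_c-1}{2},\] with equality if and only if $d_v=2$ and all these $d_w=4$. (3) If $d_v=1$ and the unique neighbor $w$ of $v$ satisfies $2\leq d_w\leq 3$, then \[R(G+c)-R(G)<\frac{s_c-1}{2}+0.075.\]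
   Context: Graphs are finite and simple; degrees $d_w$ refer to degrees in $G$. The Randi\'c index of a graph $H$ is $R(H)=\sum_{uv\in E(H)}\frac{1}{\sqrt{d_ud_v}}$, where degrees are taken in $H$. *)

theory Defs
  imports Complex_Main
begin

definition simple_graph :: "'a set \<Rightarrow> 'a set set \<Rightarrow> bool" where
  "simple_graph V E \<longleftrightarrow> finite V \<and> (\<forall>e\<in>E. \<exists>a b. a \<in> V \<and> b \<in> V \<and> a \<noteq> b \<and> e = {a, b})"

definition deg :: "'a set set \<Rightarrow> 'a \<Rightarrow> nat" where
  "deg E x = card {e \<in> E. x \<in> e}"

definition neighbors :: "'a set set \<Rightarrow> 'a \<Rightarrow> 'a set" where
  "neighbors E v = {w. {v, w} \<in> E}"

definition randic :: "'a set set \<Rightarrow> real" where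
  "randic E = (\<Sum>e\<in>E. 1 / sqrt (\<Prod>x\<in>e. real (deg E x)))"

text \<open>Edges of the cycle v, xs!0, ..., xs!(k-1), v (length k+1).\<close>
definition cycle_edges :: "'a \<Rightarrow> 'a list \<Rightarrow> 'a set set" where
  "cycle_edges v xs = {{(v # xs) ! i, (v # xs) ! (Suc i mod Suc (length xs))} | i. i < Suc (length xs)}"

definition attach_cycle :: "'a set set \<Rightarrow> 'a \<Rightarrow> 'a list \<Rightarrow> 'a set set" where
  "attach_cycle E v xs = E \<union> cycle_edges v xs"

end

theory Submission
  imports Defs
begin


lemma sg_edge: "simple_graph V E \<Longrightarrow> e \<in> E \<Longrightarrow> \<exists>a b. a\<in>V \<and> b\<in>V \<and> a\<noteq>b \<and> e={a,b}"
  by (auto simp: simple_graph_def)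

lemma sg_finE: assumes "simple_graph V E" shows "finite E"
proof -
  have "E \<subseteq> Pow V" using sg_edge[OF assms] by blast
  moreover have "finite V" using assms by (simp add: simple_graph_def)
  ultimately show ?thesis by (meson finite_Pow_iff finite_subset)
qed

lemma deg_union: assumes "finite A" "finite B" "A \<inter> B = {}"
  shows "deg (A \<union> B) x = deg A x + deg B x"
proof -
  have "{e \<in> A \<union> B. x \<in> e} = {e\<in>A. x\<in>e} \<union> {e\<in>B. x\<in>e}" by auto
  then show ?thesis unfolding deg_def using assms by (simp add: card_Un_disjoint disjoint_iff)
qed

lemma aux_mod1:
  fixes i j n :: nat
  assumes "i < n" "j < n" "3 \<le> n" "i = Suc j mod n" "Suc i mod n = j" shows False
proof (cases "Suc j = n")
  case True
  then have "i = 0" using assms by simp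
  then show ?thesis using assms True by simp
next
  case False
  then have "i = Suc j" using assms by simp
  then have "Suc (Suc j) mod n = j" using assms by simp
  moreover have "Suc j < n" using False assms by simp
  ultimately show ?thesis
  proof (cases "Suc (Suc j) = n")
    case True
    then show ?thesis using \<open>Suc (Suc j) mod n = j\<close> assms(3) by simp
  next
    case False
    then have "Suc (Suc j) < n" using \<open>Suc j < n\<close> by simp
    then show ?thesis using \<open>Suc (Suc j) mod n = j\<close> by simp
  qed
qed

lemma aux_mod2:
  fixes i p n :: nat
  assumes "i < n" "p < n"
  shows "(p = Suc i mod n) \<longleftrightarrow> (i = (if p = 0 then n - 1 else p - 1))"
proof (cases "Suc i = n")
  case True then show ?thesis using assms by auto
next
  case False then have "Suc i mod n = Suc i" using assms by simp
  then show ?thesis using assms False by auto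
qed

lemma ed_inj:
  assumes "distinct ys" "3 \<le> length ys"
  shows "inj_on (\<lambda>i. {ys!i, ys!(Suc i mod length ys)}) {..<length ys}"
proof (rule inj_onI)
  fix i j assume i: "i \<in> {..<length ys}" and j: "j \<in> {..<length ys}"
    and eq: "{ys!i, ys!(Suc i mod length ys)} = {ys!j, ys!(Suc j mod length ys)}"
  let ?n = "length ys"
  have n0: "0 < ?n" using assms(2) by linarith
  have si: "Suc i mod ?n < ?n" "Suc j mod ?n < ?n" using n0 by auto
  from eq have "(ys!i = ys!j \<and> ys!(Suc i mod ?n) = ys!(Suc j mod ?n)) \<or> (ys!i = ys!(Suc j mod ?n) \<and> ys!(Suc i mod ?n) = ys!j)"
    by (simp add: doubleton_eq_iff)
  then have "i = j \<or> (i = Suc j mod ?n \<and> Suc i mod ?n = j)"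
    using i j si assms(1) by (auto simp: nth_eq_iff_index_eq)
  then show "i = j" using aux_mod1[of i ?n j] i j assms by auto
qed

lemma ed_mem:
  assumes "distinct ys" "3 \<le> length ys" "p < length ys"
  shows "{i \<in> {..<length ys}. ys!p \<in> {ys!i, ys!(Suc i mod length ys)}} = {p, if p = 0 then length ys - 1 else p - 1}"
proof -
  let ?n = "length ys"
  have H: "ys!p \<in> {ys!i, ys!(Suc i mod length ys)} \<longleftrightarrow> i = p \<or> i = (if p = 0 then ?n - 1 else p - 1)" if "i < ?n" for i
  proof -
    have "Suc i mod ?n < ?n" using that by (intro mod_less_divisor) auto
    then have "ys!p \<in> {ys!i, ys!(Suc i mod length ys)} \<longleftrightarrow> p = i \<or> p = Suc i mod ?n"
      using that assms by (auto simp: nth_eq_iff_index_eq)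
    then show ?thesis using aux_mod2[OF that assms(3)] by auto
  qed
  have q: "(if p = 0 then ?n - 1 else p - 1) < ?n" using assms by auto
  show ?thesis
  proof (rule set_eqI)
    fix i
    show "i \<in> {i \<in> {..<length ys}. ys!p \<in> {ys!i, ys!(Suc i mod length ys)}} \<longleftrightarrow> i \<in> {p, if p = 0 then length ys - 1 else p - 1}"
    proof (cases "i < ?n")
      case True
      show ?thesis unfolding mem_Collect_eq lessThan_iff insert_iff empty_iff using H[OF True] True by blast
    next
      case False
      then show ?thesis using q assms(3) by auto
    qed
  qed
qed

lemma deg_cyc_in:
  assumes "distinct ys" "3 \<le> length ys" "x \<in> set ys"
  shows "deg ((\<lambda>i. {ys!i, ys!(Suc i mod length ys)}) ` {..<length ys}) x = 2"
proof -
  let ?n = "length ys"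
  let ?ed = "\<lambda>i. {ys!i, ys!(Suc i mod length ys)}"
  obtain p where p: "p < ?n" "x = ys!p" using assms(3) by (metis in_set_conv_nth)
  have "{e \<in> ?ed ` {..<?n}. x \<in> e} = ?ed ` {i \<in> {..<?n}. x \<in> ?ed i}" by auto
  also have "card \<dots> = card {i \<in> {..<?n}. x \<in> ?ed i}"
    by (rule card_image, rule inj_on_subset[OF ed_inj[OF assms(1,2)]]) auto
  also have "\<dots> = card {p, if p = 0 then ?n - 1 else p - 1}"
    using ed_mem[OF assms(1,2) p(1)] p(2) by simp
  also have "\<dots> = 2" using p assms(2) by auto
  finally show ?thesis unfolding deg_def .
qed

lemma deg_cyc_out:
  assumes "x \<notin> set ys"
  shows "deg ((\<lambda>i. {ys!i, ys!(Suc i mod length ys)}) ` {..<length ys}) x = 0"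
proof -
  have "x \<notin> {ys!i, ys!(Suc i mod length ys)}" if "i < length ys" for i
  proof -
    have "Suc i mod length ys < length ys" using that by (intro mod_less_divisor) auto
    then have "ys!i \<in> set ys" "ys!(Suc i mod length ys) \<in> set ys" using that by auto
    then show ?thesis using assms by auto
  qed
  then have "{e \<in> (\<lambda>i. {ys!i, ys!(Suc i mod length ys)}) ` {..<length ys}. x \<in> e} = {}"
    by blast
  then show ?thesis unfolding deg_def by simp
qed



lemma termeq:
  fixes d g :: real assumes "d > 0" "g > 0"
  shows "1/sqrt((d+2)*g) - 1/sqrt(d*g) = (1/sqrt g) * (1/sqrt(d+2) - 1/sqrt d)"
proof -
  have "sqrt((d+2)*g) = sqrt(d+2)*sqrt g" "sqrt(d*g) = sqrt d * sqrt g" by (rule real_sqrt_mult)+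
  moreover have "sqrt (d+2) > 0" "sqrt d > 0" "sqrt g > 0" using assms by auto
  ultimately show ?thesis by (simp add: field_simps)
qed

lemma ident1:
  fixes d :: real assumes "d > 0"
  shows "d * ((1/sqrt(d+2) - 1/sqrt d) / sqrt 2) + 2/sqrt((d+2)*2) = (sqrt(d+2) - sqrt d)/sqrt 2"
proof -
  define a where "a = sqrt(d+2)"
  define b where "b = sqrt d"
  have a: "a > 0" "a^2 = d+2" using assms by (auto simp: a_def)
  have b: "b > 0" "b^2 = d" using assms by (auto simp: b_def)
  have "sqrt((d+2)*2) = a * sqrt 2" unfolding a_def by (rule real_sqrt_mult)
  then have "d * ((1/a - 1/b) / sqrt 2) + 2/sqrt((d+2)*2) = (b^2 * (1/a - 1/b) + 2/a) / sqrt 2"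
    using b by (simp add: field_simps)
  also have "b^2 * (1/a - 1/b) + 2/a = (b^2 + 2)/a - b^2/b" using a b by (simp add: field_simps)
  also have "\<dots> = a^2/a - b" using a b by (simp add: power2_eq_square) (metis less_irrefl nonzero_mult_div_cancel_left)
  also have "\<dots> = a - b" using a(1) by (simp add: power2_eq_square)
  finally show ?thesis by (simp add: a_def b_def)
qed

lemma P1:
  fixes g :: "'a \<Rightarrow> nat"
  assumes "finite N" "card N = d" "\<forall>w\<in>N. g w \<ge> 2"
  shows "(\<Sum>w\<in>N. 1/sqrt((real d+2)*g w) - 1/sqrt(real d*g w)) + 2/sqrt((real d+2)*2) \<ge> (sqrt(real d+2) - sqrt (real d))/sqrt 2
     \<and> ((\<forall>w\<in>N. g w = 2) \<longrightarrow> (\<Sum>w\<in>N. 1/sqrt((real d+2)*g w) - 1/sqrt(real d*g w)) + 2/sqrt((real d+2)*2) = (sqrt(real d+2) - sqrt (real d))/sqrt 2)"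
proof (cases "d = 0")
  case True
  then have "N = {}" using assms by simp
  then show ?thesis using True by (simp add: real_sqrt_mult)
next
  case False
  then have dp: "real d > 0" by simp
  define c where "c = 1/sqrt(real d+2) - 1/sqrt (real d)"
  have cneg: "c < 0" using dp by (simp add: c_def divide_strict_left_mono)
  have T: "1/sqrt((real d+2)*g w) - 1/sqrt(real d*g w) = (1/sqrt (g w)) * c" if "w \<in> N" for w
  proof -
    have "real (g w) > 0" using assms(3) that by fastforce
    then show ?thesis using termeq[OF dp, of "real (g w)"] by (simp add: c_def)
  qed
  have ge: "(1/sqrt (g w)) * c \<ge> c / sqrt 2" if "w \<in> N" for w
  proof -
    have "real (g w) \<ge> 2" using assms(3) that by fastforce
    then have "sqrt 2 \<le> sqrt (g w)" by simp
    then have "1/sqrt (g w) \<le> 1/sqrt 2" by (intro divide_left_mono) auto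
    then show ?thesis using cneg by (simp add: mult_right_mono_neg divide_inverse mult.commute)
  qed
  have "(\<Sum>w\<in>N. 1/sqrt((real d+2)*g w) - 1/sqrt(real d*g w)) = (\<Sum>w\<in>N. (1/sqrt (g w)) * c)"
    using T by (rule sum.cong[OF refl])
  note S = this
  have "(\<Sum>w\<in>N. (1/sqrt (g w)) * c) \<ge> (\<Sum>w\<in>N. c / sqrt 2)" using ge by (rule sum_mono)
  moreover have "(\<Sum>w\<in>N. c / sqrt 2) = real d * (c / sqrt 2)" using assms(2) by simp
  moreover have "real d * (c / sqrt 2) + 2/sqrt((real d+2)*2) = (sqrt(real d+2) - sqrt (real d))/sqrt 2"
    using ident1[OF dp] by (simp add: c_def)
  moreover have "(\<forall>w\<in>N. g w = 2) \<longrightarrow> (\<Sum>w\<in>N. (1/sqrt (g w)) * c) = (\<Sum>w\<in>N. c / sqrt 2)"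
    by (auto intro!: sum.cong)
  ultimately show ?thesis unfolding S by auto
qed

lemma polyineq:
  fixes al be :: real
  assumes "al \<ge> 0" "be \<ge> 0" "al^2 + be^2 = 1" "be^2 \<ge> 1/2"
  shows "al \<le> 1/2 + be - be^2" "be^2 > 1/2 \<Longrightarrow> al < 1/2 + be - be^2"
proof -
  have "al^2 \<ge> 0" by simp
  then have "be^2 \<le> 1" using assms(3) by linarith
  then have "be^2 \<le> 1^2" by simp
  then have b1: "be \<le> 1" by (rule power2_le_imp_le) simp
  have "be * be \<le> be * 1" using mult_left_mono[OF b1 assms(2)] .
  then have rp: "1/2 + be - be^2 \<ge> 0" by (simp add: power2_eq_square)
  have a2: "al^2 = 1 - be^2" using assms(3) by simp
  have key0: "(1/2 + be - be^2)^2 - (1 - be^2) = (be^2 - 1/2) * ((be - 1)^2 + 1/2)"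
    by (simp add: power2_eq_square algebra_simps)
  have key: "(1/2 + be - be^2)^2 - al^2 = (be^2 - 1/2) * ((be - 1)^2 + 1/2)"
    using key0 a2 by simp
  have "(be - 1)^2 \<ge> 0" by simp
  then have pos: "(be - 1)^2 + 1/2 > 0" by linarith
  have "0 \<le> (be^2 - 1/2) * ((be - 1)^2 + 1/2)" using assms(4) pos by simp
  then have "al^2 \<le> (1/2 + be - be^2)^2" using key by linarith
  then show "al \<le> 1/2 + be - be^2" using rp by (rule power2_le_imp_le)
  assume "be^2 > 1/2"
  then have "0 < (be^2 - 1/2) * ((be - 1)^2 + 1/2)" using pos by simp
  then have "al^2 < (1/2 + be - be^2)^2" using key by linarith
  then show "al < 1/2 + be - be^2" using rp by (rule power2_less_imp_less)
qed

lemma Kform: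
  fixes d :: real assumes "d > 0"
  shows "d * ((1/sqrt(d+2)) * (1/sqrt(d+2) - 1/sqrt d)) + 2/sqrt((d+2)*2)
       = sqrt (2/(d+2)) + (sqrt (d/(d+2)))^2 - sqrt (d/(d+2))"
proof -
  define a where "a = sqrt(d+2)"
  define b where "b = sqrt d"
  have a: "a > 0" "a^2 = d+2" using assms by (auto simp: a_def)
  have b: "b > 0" "b^2 = d" using assms by (auto simp: b_def)
  have "sqrt((d+2)*2) = a * sqrt 2" unfolding a_def by (rule real_sqrt_mult)
  moreover have "sqrt (2/(d+2)) = sqrt 2 / a" by (simp add: a_def real_sqrt_divide)
  moreover have "sqrt (d/(d+2)) = b / a" by (simp add: a_def b_def real_sqrt_divide)
  moreover have "(b/a)^2 = d/(d+2)" using a b by (simp add: power_divide)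
  moreover have "d * ((1/a) * (1/a - 1/b)) = d/(d+2) - b/a"
  proof -
    have "d * ((1/a) * (1/a - 1/b)) = d/a^2 - d/(a*b)" using a(1) b(1) by (simp add: field_simps power2_eq_square)
    also have "d/(a*b) = b/a" using a(1) b(1) b(2)[symmetric] by (simp add: power2_eq_square)
    also have "d/a^2 = d/(d+2)" using a by simp
    finally show ?thesis .
  qed
  moreover have "2/(a * sqrt 2) = sqrt 2 / a" using a
    by (simp add: field_simps)
  ultimately show ?thesis by (simp add: a_def b_def)
qed

lemma P2:
  fixes g :: "'a \<Rightarrow> nat"
  assumes "finite N" "card N = d" "d \<ge> 2" "\<forall>w\<in>N. 1 \<le> g w \<and> g w \<le> d + 2"
  shows "(\<Sum>w\<in>N. 1/sqrt((real d+2)*g w) - 1/sqrt(real d*g w)) + 2/sqrt((real d+2)*2) \<le> 1/2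
     \<and> ((\<Sum>w\<in>N. 1/sqrt((real d+2)*g w) - 1/sqrt(real d*g w)) + 2/sqrt((real d+2)*2) = 1/2
         \<longleftrightarrow> d = 2 \<and> (\<forall>w\<in>N. g w = 4))"
proof -
  have dp: "real d > 0" using assms(3) by simp
  define c where "c = 1/sqrt(real d+2) - 1/sqrt (real d)"
  have cneg: "c < 0" using dp by (simp add: c_def divide_strict_left_mono)
  define S where "S = (\<Sum>w\<in>N. 1/sqrt((real d+2)*g w) - 1/sqrt(real d*g w))"
  define K where "K = real d * ((1/sqrt(real d+2)) * c) + 2/sqrt((real d+2)*2)"
  have T: "1/sqrt((real d+2)*g w) - 1/sqrt(real d*g w) = (1/sqrt (g w)) * c" if "w \<in> N" for w
  proof -
    have "real (g w) > 0" using assms(4) that by fastforce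
    then show ?thesis using termeq[OF dp, of "real (g w)"] by (simp add: c_def)
  qed
  have le: "(1/sqrt (g w)) * c \<le> (1/sqrt(real d+2)) * c" if "w \<in> N" for w
  proof -
    have "real (g w) \<le> real d + 2" "real (g w) \<ge> 1" using assms(4) that by auto
    then have "sqrt (g w) \<le> sqrt (real d+2)" "sqrt (g w) > 0" by auto
    then have "1/sqrt(real d+2) \<le> 1/sqrt (g w)" by (intro divide_left_mono) auto
    from mult_right_mono_neg[OF this, of c] cneg show ?thesis by simp
  qed
  have lt: "(1/sqrt (g w)) * c < (1/sqrt(real d+2)) * c" if "w \<in> N" "g w \<noteq> d + 2" for w
  proof -
    have "real (g w) < real d + 2" "real (g w) \<ge> 1" using assms(4) that by auto
    then have "sqrt (g w) < sqrt (real d+2)" "sqrt (g w) > 0" by auto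
    then have "1/sqrt(real d+2) < 1/sqrt (g w)" by (intro divide_strict_left_mono) auto
    from mult_strict_right_mono_neg[OF this, of c] cneg show ?thesis by simp
  qed
  have S2: "S = (\<Sum>w\<in>N. (1/sqrt (g w)) * c)" unfolding S_def using T by (rule sum.cong[OF refl])
  have cs: "(\<Sum>w\<in>N. (1/sqrt(real d+2)) * c) = real d * ((1/sqrt(real d+2)) * c)" using assms(2) by simp
  have SK: "S + 2/sqrt((real d+2)*2) \<le> K"
  proof -
    have "S \<le> (\<Sum>w\<in>N. (1/sqrt(real d+2)) * c)" unfolding S2 using le by (rule sum_mono)
    then show ?thesis unfolding K_def cs by simp
  qed
  have SKs: "S + 2/sqrt((real d+2)*2) < K" if "\<exists>w\<in>N. g w \<noteq> d + 2"
  proof -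
    have "S < (\<Sum>w\<in>N. (1/sqrt(real d+2)) * c)" unfolding S2
      using assms(1) le lt that by (intro sum_strict_mono_ex1) auto
    then show ?thesis unfolding K_def cs by simp
  qed
  define al where "al = sqrt (2/(real d+2))"
  define be where "be = sqrt (real d/(real d+2))"
  have Kf: "K = al + be^2 - be" unfolding K_def al_def be_def c_def using Kform[OF dp] by simp
  have al2: "al^2 = 2/(real d+2)" unfolding al_def by simp
  have be2: "be^2 = real d/(real d+2)" unfolding be_def using dp by simp
  have "al^2 + be^2 = 2/(real d+2) + real d/(real d+2)" by (simp only: al2 be2)
  also have "\<dots> = 1" using dp by (simp add: add_divide_distrib[symmetric])
  finally have sum1: "al^2 + be^2 = 1" .
  have "real d \<ge> 2" using assms(3) by simp
  then have "real d/(real d+2) \<ge> 1/2" by (simp add: field_simps)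
  then have be_half: "be^2 \<ge> 1/2" by (simp only: be2)
  have "al \<ge> 0" "be \<ge> 0" by (auto simp: al_def be_def)
  note ab = this
  have "al \<le> 1/2 + be - be^2" by (rule polyineq(1)[OF ab sum1 be_half])
  then have Kle: "K \<le> 1/2" using Kf by linarith
  have Klt: "K < 1/2" if "d \<noteq> 2"
  proof -
    have "real d \<ge> 3" using that assms(3) by simp
    then have "real d/(real d+2) > 1/2" by (simp add: field_simps)
    then have "be^2 > 1/2" by (simp only: be2)
    then have "al < 1/2 + be - be^2" by (rule polyineq(2)[OF ab sum1 be_half])
    then show ?thesis using Kf by linarith
  qed
  have eqcase: "S + 2/sqrt((real d+2)*2) = 1/2" if "d = 2" "\<forall>w\<in>N. g w = 4"
  proof -
    have "S = K - 2/sqrt((real d+2)*2)" unfolding S2 K_def cs[symmetric] using that by (auto intro!: sum.cong)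
    moreover have "K = 1/2" using Kf that(1) al_def be_def be2 by simp
    ultimately show ?thesis by simp
  qed
  have "S + 2/sqrt((real d+2)*2) \<le> 1/2 \<and> (S + 2/sqrt((real d+2)*2) = 1/2 \<longleftrightarrow> d = 2 \<and> (\<forall>w\<in>N. g w = 4))"
  proof (rule conjI, rule_tac[2] iffI)
    show "S + 2/sqrt((real d+2)*2) \<le> 1/2" using SK Kle by simp
  next
    assume h: "S + 2/sqrt((real d+2)*2) = 1/2"
    have "\<forall>w\<in>N. g w = d + 2" using SKs Kle h by force
    moreover have "d = 2" using Klt SK h by force
    ultimately show "d = 2 \<and> (\<forall>w\<in>N. g w = 4)" by simp
  next
    assume "d = 2 \<and> (\<forall>w\<in>N. g w = 4)"
    then show "S + 2/sqrt((real d+2)*2) = 1/2" using eqcase by blast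
  qed
  then show ?thesis unfolding S_def .
qed

lemma sqrt_ub: fixes x y :: real assumes "0 \<le> y" "x < y^2" shows "sqrt x < y"
proof -
  have "sqrt x < sqrt (y^2)" using assms(2) by (simp only: real_sqrt_less_iff)
  then show ?thesis using assms(1) by simp
qed

lemma P3:
  fixes g :: nat assumes "2 \<le> g" "g \<le> 3"
  shows "1/sqrt((real 1+2)*g) - 1/sqrt(real 1*g) + 2/sqrt((real 1+2)*2) < 1/2 + 0.075"
proof -
  have s6: "sqrt 6 > 2.449" by (rule real_less_rsqrt) (simp add: power2_eq_square)
  have s3: "sqrt 3 < 1.7321" by (rule sqrt_ub) (simp_all add: power2_eq_square)
  have s2: "sqrt 2 < 1.4143" by (rule sqrt_ub) (simp_all add: power2_eq_square)
  have "g = 2 \<or> g = 3" using assms by auto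
  then show ?thesis
  proof
    assume g: "g = 2"
    have "1/sqrt((real 1+2)*g) - 1/sqrt(real 1*g) + 2/sqrt((real 1+2)*2) = 3/sqrt 6 - 1/sqrt 2"
      using g by simp
    moreover have "3/sqrt 6 < 3/2.449" by (rule divide_strict_left_mono[OF s6]) auto
    moreover have "1/sqrt 2 > 1/1.4143" by (rule divide_strict_left_mono[OF s2]) auto
    ultimately show ?thesis by simp
  next
    assume g: "g = 3"
    have "1/sqrt((real 1+2)*g) - 1/sqrt(real 1*g) + 2/sqrt((real 1+2)*2) = 1/3 - 1/sqrt 3 + 2/sqrt 6"
      using g by simp
    moreover have "2/sqrt 6 < 2/2.449" by (rule divide_strict_left_mono[OF s6]) auto
    moreover have "1/sqrt 3 > 1/1.7321" by (rule divide_strict_left_mono[OF s3]) auto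
    ultimately show ?thesis by simp
  qed
qed

theorem lemma2p7:
  fixes V :: "'a set" and E :: "'a set set" and v :: 'a and xs :: "'a list"
  assumes G: "simple_graph V E"
    and vV: "v \<in> V"
    and new: "distinct xs" "set xs \<inter> V = {}"
    and len: "length xs + 1 \<ge> 3"
  defines "s \<equiv> real (length xs + 1)"
    and "Gc \<equiv> attach_cycle E v xs"
    and "dv \<equiv> real (deg E v)"
  shows
   "((\<forall>w\<in>neighbors E v. deg E w \<ge> 2) \<longrightarrow>
       randic Gc - randic E \<ge> (sqrt (dv + 2) - sqrt dv) / sqrt 2 + (s - 2) / 2 \<and>
       ((\<forall>w\<in>neighbors E v. deg E w = 2) \<longrightarrow>
          randic Gc - randic E = (sqrt (dv + 2) - sqrt dv) / sqrt 2 + (s - 2) / 2))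
    \<and>
    ((deg E v \<ge> 2 \<and> (\<forall>w\<in>neighbors E v. deg E w \<le> deg E v + 2)) \<longrightarrow>
       randic Gc - randic E \<le> (s - 1) / 2 \<and>
       (randic Gc - randic E = (s - 1) / 2 \<longleftrightarrow>
          deg E v = 2 \<and> (\<forall>w\<in>neighbors E v. deg E w = 4)))
    \<and>
    (\<forall>w. deg E v = 1 \<and> w \<in> neighbors E v \<and> 2 \<le> deg E w \<and> deg E w \<le> 3 \<longrightarrow>
       randic Gc - randic E < (s - 1) / 2 + 0.075)"
proof -
  note defs = assms(6-8)
  have Gc_def: "Gc = attach_cycle E v xs" and s_def: "s = real (length xs + 1)" and dv_def: "dv = real (deg E v)"
    using defs by simp_all
  define ys where "ys = v # xs"
  define n where "n = length ys"
  define ed where "ed = (\<lambda>i. {ys!i, ys!(Suc i mod n)})"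
  define C where "C = cycle_edges v xs"
  define N where "N = neighbors E v"
  define d where "d = deg E v"
  have n3: "3 \<le> n" using len by (simp add: n_def ys_def)
  have vx: "v \<notin> set xs" using new(2) vV by blast
  have dys: "distinct ys" using new(1) vx by (simp add: ys_def)
  have Ceq: "C = ed ` {..<n}" by (auto simp: C_def cycle_edges_def ed_def ys_def n_def)
  have finE: "finite E" by (rule sg_finE[OF G])
  have finC: "finite C" using Ceq by simp
  have Esub: "\<forall>e\<in>E. e \<subseteq> V" using sg_edge[OF G] by blast
  have disj: "E \<inter> C = {}"
  proof (rule ccontr)
    assume "E \<inter> C \<noteq> {}" then obtain i where i: "i < n" "ed i \<in> E" using Ceq by auto
    have lt: "Suc i mod n < n" using i by (intro mod_less_divisor) auto
    have ne: "i \<noteq> Suc i mod n" using i n3 by (cases "Suc i = n") auto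
    have "ys!i \<noteq> ys!(Suc i mod n)" using dys i lt ne by (simp add: nth_eq_iff_index_eq n_def)
    moreover have "ys!i \<in> V" "ys!(Suc i mod n) \<in> V" using Esub i(2) by (auto simp: ed_def)
    moreover have "ys!i \<in> set ys" "ys!(Suc i mod n) \<in> set ys" using i lt by (auto simp: n_def)
    ultimately show False using new(2) by (auto simp: ys_def)
  qed
  have degC: "deg C x = (if x \<in> set ys then 2 else 0)" for x
    unfolding Ceq ed_def n_def using deg_cyc_in[OF dys] deg_cyc_out[of x ys] n3 by (auto simp: n_def)
  have GcEC: "Gc = E \<union> C" by (simp add: Gc_def attach_cycle_def C_def)
  have degGc: "deg Gc x = deg E x + (if x \<in> set ys then 2 else 0)" for x
    unfolding GcEC using deg_union[OF finE finC disj] degC by simp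
  have degE0: "deg E x = 0" if "x \<notin> V" for x
  proof -
    have "{e\<in>E. x\<in>e} = {}" using Esub that by auto
    then show ?thesis unfolding deg_def by (metis card.empty)
  qed
  have degV: "deg Gc x = deg E x" if "x \<in> V" "x \<noteq> v" for x
    using degGc[of x] that new(2) by (auto simp: ys_def)
  have degv: "deg Gc v = d + 2" using degGc[of v] by (simp add: ys_def d_def)
  have degx: "deg Gc x = 2" if "x \<in> set xs" for x
  proof -
    have "x \<notin> V" using that new(2) by auto
    then show ?thesis using degGc[of x] degE0[of x] that by (simp add: ys_def)
  qed
  define wG where "wG = (\<lambda>e. 1 / sqrt (\<Prod>x\<in>e. real (deg Gc x)))"
  define wE where "wE = (\<lambda>e. 1 / sqrt (\<Prod>x\<in>e. real (deg E x)))"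
  have RGc: "randic Gc = (\<Sum>e\<in>E. wG e) + (\<Sum>e\<in>C. wG e)"
    unfolding randic_def wG_def GcEC using finE finC disj by (rule sum.union_disjoint)
  have RE: "randic E = (\<Sum>e\<in>E. wE e)" unfolding randic_def wE_def ..
  have NV: "N \<subseteq> V" using Esub by (auto simp: N_def neighbors_def)
  have finN: "finite N" using NV G by (auto simp: simple_graph_def intro: finite_subset)
  have Nne: "w \<noteq> v" if "w \<in> N" for w
  proof -
    have "{v,w} \<in> E" using that by (simp add: N_def neighbors_def)
    then obtain a b where "a \<noteq> b" "{v,w} = {a,b}" using sg_edge[OF G] by blast
    then show ?thesis by (auto simp: doubleton_eq_iff)
  qed
  have Ev: "{e\<in>E. v\<in>e} = (\<lambda>w. {v,w}) ` N"
  proof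
    show "{e\<in>E. v\<in>e} \<subseteq> (\<lambda>w. {v,w}) ` N"
    proof
      fix e assume e: "e \<in> {e\<in>E. v\<in>e}"
      then obtain a b where ab: "e = {a,b}" using sg_edge[OF G] by blast
      show "e \<in> (\<lambda>w. {v,w}) ` N"
      proof (cases "a = v")
        case True then show ?thesis using e ab by (auto simp: N_def neighbors_def)
      next
        case False then have "b = v" using e ab by auto
        then have "e = {v,a}" using ab by auto
        then show ?thesis using e by (auto simp: N_def neighbors_def)
      qed
    qed
  next
    show "(\<lambda>w. {v,w}) ` N \<subseteq> {e\<in>E. v\<in>e}" by (auto simp: N_def neighbors_def)
  qed
  have injN: "inj_on (\<lambda>w. {v,w}) N" by (auto simp: inj_on_def doubleton_eq_iff)
  have cardN: "card N = d" unfolding d_def deg_def Ev using card_image[OF injN] by simp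
  have degw1: "1 \<le> deg E w" if "w \<in> N" for w
  proof -
    have "{v,w} \<in> {e\<in>E. w\<in>e}" using that by (simp add: N_def neighbors_def)
    moreover have "finite {e\<in>E. w\<in>e}" using finE by simp
    ultimately have "card {e\<in>E. w\<in>e} \<noteq> 0" by auto
    then show ?thesis by (simp add: deg_def)
  qed
  have zero: "wG e - wE e = 0" if "e \<in> E - {e\<in>E. v\<in>e}" for e
  proof -
    have "e \<subseteq> V" "v \<notin> e" using that Esub by auto
    then have "(\<Prod>x\<in>e. real (deg Gc x)) = (\<Prod>x\<in>e. real (deg E x))"
      using degV by (intro prod.cong) auto
    then show ?thesis by (simp add: wG_def wE_def)
  qed
  have Epart: "(\<Sum>e\<in>E. wG e) - (\<Sum>e\<in>E. wE e)
      = (\<Sum>w\<in>N. 1/sqrt((real d+2)*real (deg E w)) - 1/sqrt(real d*real (deg E w)))"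
  proof -
    have "(\<Sum>e\<in>E. wG e) - (\<Sum>e\<in>E. wE e) = (\<Sum>e\<in>E. wG e - wE e)" by (simp add: sum_subtractf)
    also have "\<dots> = (\<Sum>e\<in>{e\<in>E. v\<in>e}. wG e - wE e)"
      using finE zero by (intro sum.mono_neutral_right) auto
    also have "\<dots> = (\<Sum>w\<in>N. wG {v,w} - wE {v,w})"
      unfolding Ev using injN by (simp add: sum.reindex)
    also have "\<dots> = (\<Sum>w\<in>N. 1/sqrt((real d+2)*real (deg E w)) - 1/sqrt(real d*real (deg E w)))"
    proof (rule sum.cong[OF refl])
      fix w assume w: "w \<in> N"
      have "w \<noteq> v" "w \<in> V" using Nne w NV by auto
      then show "wG {v,w} - wE {v,w} = 1/sqrt((real d+2)*real (deg E w)) - 1/sqrt(real d*real (deg E w))"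
        using degV[of w] degv by (simp add: wG_def wE_def d_def)
    qed
    finally show ?thesis .
  qed
  have "\<exists>j. length xs = Suc j \<and> 1 \<le> j" using len by presburger
  then obtain j where j: "length xs = Suc j" "1 \<le> j" by blast
  have nj: "n = Suc (Suc j)" using j by (simp add: n_def ys_def)
  define D where "D = (\<lambda>x. real (if x = v then d + 2 else 2))"
  have Dys: "real (deg Gc x) = D x" if "x \<in> set ys" for x
    using that degv degx by (auto simp: D_def ys_def)
  have wed: "wG (ed i) = 1/sqrt (D (ys!i) * D (ys!(Suc i mod n)))" if "i < n" for i
  proof -
    have lt: "Suc i mod n < n" using that by (intro mod_less_divisor) auto
    have ne: "i \<noteq> Suc i mod n" using that n3 by (cases "Suc i = n") auto
    have "ys!i \<noteq> ys!(Suc i mod n)" using dys that lt ne by (simp add: nth_eq_iff_index_eq n_def)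
    moreover have "ys!i \<in> set ys" "ys!(Suc i mod n) \<in> set ys" using that lt by (auto simp: n_def)
    ultimately show ?thesis using Dys by (simp add: wG_def ed_def)
  qed
  have Cpart: "(\<Sum>e\<in>C. wG e) = 2/sqrt((real d+2)*2) + (s-2)/2"
  proof -
    have injE: "inj_on ed {..<n}" unfolding ed_def n_def using ed_inj[OF dys] n3 by (simp add: n_def)
    have "(\<Sum>e\<in>C. wG e) = (\<Sum>i<n. wG (ed i))" unfolding Ceq using injE by (simp add: sum.reindex)
    also have "\<dots> = (\<Sum>i<n. 1/sqrt (D (ys!i) * D (ys!(Suc i mod n))))" using wed by simp
    also have "\<dots> = 2/sqrt((real d+2)*2) + real j/2"
    proof -
      define f where "f = (\<lambda>i. 1/sqrt (D (ys!i) * D (ys!(Suc i mod n))))"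
      have c1: "(\<Sum>i<Suc (Suc j). f i) = (\<Sum>i<Suc j. f i) + f (Suc j)" by (rule sum.lessThan_Suc)
      have c2: "(\<Sum>i<Suc j. f i) = f 0 + (\<Sum>i<j. f (Suc i))" by (rule sum.lessThan_Suc_shift)
      have "(\<Sum>i<n. f i) = f 0 + (\<Sum>i<j. f (Suc i)) + f (Suc j)"
        unfolding nj using c1 c2 by linarith
      moreover have "f 0 = 1/sqrt((real d+2)*2)"
      proof -
        have "ys!(Suc 0 mod n) = xs!0" using n3 by (simp add: ys_def)
        moreover have "xs!0 \<noteq> v" using vx j by (metis nth_mem zero_less_Suc)
        ultimately show ?thesis by (simp add: f_def D_def ys_def)
      qed
      moreover have "f (Suc j) = 1/sqrt((real d+2)*2)"
      proof -
        have "ys!(Suc (Suc j) mod n) = v" using nj by (simp add: ys_def)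
        moreover have "ys!(Suc j) = xs!j" by (simp add: ys_def)
        moreover have "xs!j \<noteq> v" using vx j by (metis nth_mem lessI)
        ultimately show ?thesis by (simp add: f_def D_def mult.commute)
      qed
      moreover have "(\<Sum>i<j. f (Suc i)) = real j / 2"
      proof -
        have "f (Suc i) = 1/2" if "i < j" for i
        proof -
          have "Suc (Suc i) mod n = Suc (Suc i)" using that nj by simp
          moreover have "ys!(Suc i) = xs!i" "ys!(Suc (Suc i)) = xs!(Suc i)" by (simp_all add: ys_def)
          moreover have "xs!i \<noteq> v" "xs!(Suc i) \<noteq> v" using vx j that by (metis nth_mem less_SucI Suc_mono)+
          moreover have "sqrt 4 = 2" by (simp add: real_sqrt_eq_iff power2_eq_square[symmetric]) 
          ultimately show ?thesis by (simp add: f_def D_def)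
        qed
        then have "(\<Sum>i<j. f (Suc i)) = (\<Sum>i<j. (1::real)/2)" by (intro sum.cong) auto
        then show ?thesis by simp
      qed
      ultimately show ?thesis by (simp add: f_def)
    qed
    also have "real j = s - 2" using j by (simp add: s_def)
    finally show ?thesis .
  qed
  have delta: "randic Gc - randic E = (\<Sum>w\<in>N. 1/sqrt((real d+2)*real (deg E w)) - 1/sqrt(real d*real (deg E w)))
      + 2/sqrt((real d+2)*2) + (s-2)/2"
    using RGc RE Epart Cpart by simp
  define S where "S = (\<Sum>w\<in>N. 1/sqrt((real d+2)*real (deg E w)) - 1/sqrt(real d*real (deg E w)))"
  have dvd: "dv = real d" by (simp add: dv_def d_def)
  have delta': "randic Gc - randic E = S + 2/sqrt((real d+2)*2) + (s-2)/2" using delta by (simp add: S_def)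
  have part1: "(\<forall>w\<in>neighbors E v. deg E w \<ge> 2) \<longrightarrow>
       randic Gc - randic E \<ge> (sqrt (dv + 2) - sqrt dv) / sqrt 2 + (s - 2) / 2 \<and>
       ((\<forall>w\<in>neighbors E v. deg E w = 2) \<longrightarrow>
          randic Gc - randic E = (sqrt (dv + 2) - sqrt dv) / sqrt 2 + (s - 2) / 2)"
  proof
    assume H: "\<forall>w\<in>neighbors E v. deg E w \<ge> 2"
    have "S + 2/sqrt((real d+2)*2) \<ge> (sqrt(real d+2) - sqrt (real d))/sqrt 2
     \<and> ((\<forall>w\<in>N. deg E w = 2) \<longrightarrow> S + 2/sqrt((real d+2)*2) = (sqrt(real d+2) - sqrt (real d))/sqrt 2)"
      unfolding S_def using P1[OF finN cardN, of "deg E"] H by (simp add: N_def)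
    then show "randic Gc - randic E \<ge> (sqrt (dv + 2) - sqrt dv) / sqrt 2 + (s - 2) / 2 \<and>
       ((\<forall>w\<in>neighbors E v. deg E w = 2) \<longrightarrow>
          randic Gc - randic E = (sqrt (dv + 2) - sqrt dv) / sqrt 2 + (s - 2) / 2)"
      unfolding delta' dvd N_def by auto
  qed
  have part2: "(deg E v \<ge> 2 \<and> (\<forall>w\<in>neighbors E v. deg E w \<le> deg E v + 2)) \<longrightarrow>
       randic Gc - randic E \<le> (s - 1) / 2 \<and>
       (randic Gc - randic E = (s - 1) / 2 \<longleftrightarrow>
          deg E v = 2 \<and> (\<forall>w\<in>neighbors E v. deg E w = 4))"
  proof
    assume H: "deg E v \<ge> 2 \<and> (\<forall>w\<in>neighbors E v. deg E w \<le> deg E v + 2)"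
    then have d2: "d \<ge> 2" by (simp add: d_def)
    have "\<forall>w\<in>N. 1 \<le> deg E w \<and> deg E w \<le> d + 2" using H degw1 by (simp add: N_def d_def)
    from P2[OF finN cardN d2 this]
    have "S + 2/sqrt((real d+2)*2) \<le> 1/2
     \<and> (S + 2/sqrt((real d+2)*2) = 1/2 \<longleftrightarrow> d = 2 \<and> (\<forall>w\<in>N. deg E w = 4))"
      unfolding S_def .
    moreover have "(s - 1) / 2 = 1/2 + (s-2)/2" by (simp add: field_simps)
    ultimately show "randic Gc - randic E \<le> (s - 1) / 2 \<and>
       (randic Gc - randic E = (s - 1) / 2 \<longleftrightarrow>
          deg E v = 2 \<and> (\<forall>w\<in>neighbors E v. deg E w = 4))"
      unfolding delta' by (auto simp: N_def d_def)
  qed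
  have part3: "\<forall>w. deg E v = 1 \<and> w \<in> neighbors E v \<and> 2 \<le> deg E w \<and> deg E w \<le> 3 \<longrightarrow>
       randic Gc - randic E < (s - 1) / 2 + 0.075"
  proof (intro allI impI)
    fix w assume H: "deg E v = 1 \<and> w \<in> neighbors E v \<and> 2 \<le> deg E w \<and> deg E w \<le> 3"
    then have d1: "d = 1" and wN: "w \<in> N" by (simp_all add: d_def N_def)
    have "card N = 1" using cardN d1 by simp
    then have Nw: "N = {w}" using wN by (metis card_1_singletonE singletonD)
    have "S = 1/sqrt((real 1+2)*real (deg E w)) - 1/sqrt(real 1*real (deg E w))"
      unfolding S_def Nw d1 by simp
    then have P: "S + 2/sqrt((real 1+2)*2) < 1/2 + 0.075" using P3[of "deg E w"] H by simp
    have aux: "A + (s-2)/2 < (s-1)/2 + c" if "A < 1/2 + c" for A c :: real using that by (simp add: field_simps)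
    show "randic Gc - randic E < (s - 1) / 2 + 0.075" unfolding delta' d1 by (rule aux[OF P])
  qed
  show ?thesis using part1 part2 part3 by blast
qed

end
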